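(* Let $e^{i\theta(p)}=\frac{\sqrt{1-p^2}}{p}\left(\frac{\sqrt{2}\,p}{1+p}\sqrt{\frac{p}{1-p}}+\frac{p\,i}{1+p}\right)$ (a complex number of modulus one). Then the tuple $(e^{i\theta(p)}p,\sqrt{1-p^2})$ is simulable.
   Context: Let $p\in[0,1]$ be an unknown parameter and let $|p\rangle=\sqrt{p}|0\rangle+\sqrt{1-p}|1\rangle$. For a complex function $h(p)$ write $|f_h\rangle=\frac{1}{\sqrt{1+|h(p)|^2}}(h(p)|0\rangle+|1\rangle)$. A tuple $(k_0(p),k_1(p))$ of complex functions with $|k_0|^2+|k_1|^2=1$ is called simulable if, starting from an unbounded supply of copies of $|p\rangle$, one can produce the single-qubit state $|f_{k_0/k_1}\rangle=k_0(p)|0\rangle+k_1(p)|1\rangle$ (up to a global phase) in finitely many steps with nonzero success probability, where each step applies a unitary transformation or a measurement (in the computational basis) to the current state together with auxiliary qubits; the operations may not depend on $p$. Auxiliary qubits may be other simulable states or constant states $|a_c\rangle=\frac{1}{\sqrt{|a|^2+1}}(a|0\rangle+|1\rangle)$ with $a\in\mathbb{C}$ a constant independent of $p$. *)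

theory Defs
  imports "HOL-Analysis.Analysis"
begin

text \<open>A state of n qubits is a vector in C^(2^n), represented as a function
  nat \<Rightarrow> complex supported on indices below 2^n.  Basis index i of an
  (n+m)-qubit product state is i = j * 2^m + k (first factor = more significant
  qubits).\<close>

type_synonym qstate = "nat \<Rightarrow> complex"

definition qubit_p :: "real \<Rightarrow> qstate" where
  "qubit_p p = (\<lambda>i. if i = 0 then complex_of_real (sqrt p)
                    else if i = 1 then complex_of_real (sqrt (1 - p)) else 0)"

definition const_state :: "complex \<Rightarrow> qstate" where
  "const_state a = (\<lambda>i. if i = 0 then a / complex_of_real (sqrt (norm a ^ 2 + 1))
                    else if i = 1 then 1 / complex_of_real (sqrt (norm a ^ 2 + 1)) else 0)"

definition tensor :: "nat \<Rightarrow> qstate \<Rightarrow> qstate \<Rightarrow> qstate" where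
  "tensor m v w = (\<lambda>i. v (i div 2 ^ m) * w (i mod 2 ^ m))"

definition unitary_mat :: "nat \<Rightarrow> (nat \<Rightarrow> nat \<Rightarrow> complex) \<Rightarrow> bool" where
  "unitary_mat N U \<longleftrightarrow> (\<forall>i<N. \<forall>j<N.
      (\<Sum>k<N. cnj (U k i) * U k j) = (if i = j then 1 else 0))"

definition apply_mat :: "nat \<Rightarrow> (nat \<Rightarrow> nat \<Rightarrow> complex) \<Rightarrow> qstate \<Rightarrow> qstate" where
  "apply_mat N U v = (\<lambda>i. if i < N then (\<Sum>j<N. U i j * v j) else 0)"

text \<open>Unnormalised post-measurement vector: measure the last (least significant)
  qubit of an (n+1)-qubit state in the computational basis, keep outcome b, and
  discard the measured qubit.\<close>
definition meas_branch :: "nat \<Rightarrow> bool \<Rightarrow> qstate \<Rightarrow> qstate" where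
  "meas_branch n b v = (\<lambda>i. if i < 2 ^ n then v (2 * i + (if b then 1 else 0)) else 0)"

definition vnorm :: "nat \<Rightarrow> qstate \<Rightarrow> real" where
  "vnorm n v = sqrt (\<Sum>i<2 ^ n. (norm (v i))\<^sup>2)"

text \<open>The measured qubit is discarded; by applying swap
  unitaries any qubit can be brought to the last position.\<close>
inductive producible :: "nat \<Rightarrow> (real \<Rightarrow> qstate) \<Rightarrow> bool" where
  copy: "producible 1 qubit_p"
| const: "producible 1 (\<lambda>p. const_state a)"
| tens: "producible n \<psi> \<Longrightarrow> producible m \<phi> \<Longrightarrow>
           producible (n + m) (\<lambda>p. tensor m (\<psi> p) (\<phi> p))"
| unit: "producible n \<psi> \<Longrightarrow> unitary_mat (2 ^ n) U \<Longrightarrow>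
           producible n (\<lambda>p. apply_mat (2 ^ n) U (\<psi> p))"
| meas: "producible (Suc n) \<psi> \<Longrightarrow>
           (\<forall>p\<in>{0<..<1}. vnorm n (meas_branch n b (\<psi> p)) \<noteq> 0) \<Longrightarrow>
           producible n (\<lambda>p i. meas_branch n b (\<psi> p) i / complex_of_real (vnorm n (meas_branch n b (\<psi> p))))"

definition simulable :: "(real \<Rightarrow> complex) \<Rightarrow> (real \<Rightarrow> complex) \<Rightarrow> bool" where
  "simulable k0 k1 \<longleftrightarrow> (\<exists>\<psi>. producible 1 \<psi> \<and>
     (\<forall>p\<in>{0<..<1}. \<exists>c. norm c = 1 \<and> \<psi> p 0 = c * k0 p \<and> \<psi> p 1 = c * k1 p))"

end

theory Submission
  imports Defs
begin

definition ux :: real where "ux = 1 / sqrt 3"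
definition uy :: real where "uy = sqrt 2 / sqrt 3"
definition uu :: real where "uu = 1 / sqrt 2"
definition uv :: real where "uv = 1 / sqrt 6"

lemma ux2: "ux * ux = 1/3" unfolding ux_def by (simp add: power2_eq_square[symmetric] power_divide)
lemma uy2: "uy * uy = 2/3" unfolding uy_def by (simp add: power2_eq_square[symmetric] power_divide)
lemma uu2: "uu * uu = 1/2" unfolding uu_def by (simp add: power2_eq_square[symmetric] power_divide)
lemma uv2: "uv * uv = 1/6" unfolding uv_def by (simp add: power2_eq_square[symmetric] power_divide)

lemma csq: "complex_of_real ux * complex_of_real ux = 1/3" "complex_of_real uy * complex_of_real uy = 2/3"
  "complex_of_real uu * complex_of_real uu = 1/2" "complex_of_real uv * complex_of_real uv = 1/6"
  by (simp_all add: of_real_mult[symmetric] ux2 uy2 uu2 uv2)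

definition UM :: "nat \<Rightarrow> nat \<Rightarrow> complex" where
  "UM i j = [[of_real uy, \<i> * of_real ux, 0,0,0,0,0,0],
             [\<i> * of_real ux, of_real uy, 0,0,0,0,0,0],
             [0,0, of_real uu, 0, - of_real uu, 0,0,0],
             [0,0,0,1,0,0,0,0],
             [0,0, of_real ux, 0, of_real ux, 0,0, of_real ux],
             [0,0,0,0,0,1,0,0],
             [0,0,0,0,0,0,1,0],
             [0,0, of_real uv, 0, of_real uv, 0,0, - 2 * of_real uv]] ! i ! j"

lemma UM_unitary: "unitary_mat (2^3) UM"
  unfolding unitary_mat_def
  apply (simp add: numeral_eq_Suc lessThan_Suc less_Suc_eq UM_def)
  apply (simp add: csq)
  apply (simp add: algebra_simps csq)
  done

lemma sum8: "(\<Sum>j<(2::nat)^3. f j) = f 0 + f 1 + f 2 + f 3 + f 4 + f 5 + f 6 + (f 7 :: complex)"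
  by (simp add: eval_nat_numeral)

definition T3 :: "real \<Rightarrow> qstate" where
  "T3 p = tensor 1 (tensor 1 (qubit_p p) (qubit_p p)) (qubit_p p)"

definition Psi :: "real \<Rightarrow> qstate" where
  "Psi p = apply_mat (2^3) UM (T3 p)"

lemma Psi_prod: "producible 3 Psi"
proof -
  have "producible (1+1) (\<lambda>p. tensor 1 (qubit_p p) (qubit_p p))"
    by (rule producible.tens[OF producible.copy producible.copy])
  then have "producible (1+1+1) T3"
    unfolding T3_def by (rule producible.tens[OF _ producible.copy])
  moreover have "(1+1+1::nat) = 3" by simp
  ultimately have "producible 3 T3" by metis
  then show ?thesis unfolding Psi_def by (rule producible.unit[OF _ UM_unitary])
qed

lemma Psi0: "Psi p 0 = of_real uy * of_real (sqrt p) * of_real (sqrt p) * of_real (sqrt p)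
   + \<i> * of_real ux * of_real (sqrt p) * of_real (sqrt p) * of_real (sqrt (1-p))"
  unfolding Psi_def apply_mat_def sum8 by (simp add: T3_def tensor_def qubit_p_def UM_def)

lemma Psi4: "Psi p 4 = of_real ux * (2 * of_real (sqrt p) * of_real (sqrt p) * of_real (sqrt (1-p)) + of_real (sqrt (1-p)) * of_real (sqrt (1-p)) * of_real (sqrt (1-p)))"
  unfolding Psi_def apply_mat_def sum8 by (simp add: T3_def tensor_def qubit_p_def UM_def) (simp add: algebra_simps)

lemma sum2: "(\<Sum>j<(2::nat)^1. f j) = f 0 + (f 1 :: real)"
  by (simp add: eval_nat_numeral)

lemma meas2:
  fixes v :: qstate
  defines "n1 \<equiv> vnorm 2 (meas_branch 2 False v)"
  defines "\<Phi> \<equiv> (\<lambda>i. meas_branch 2 False v i / complex_of_real n1)"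
  defines "n2 \<equiv> vnorm 1 (meas_branch 1 False \<Phi>)"
  assumes D: "(norm (v 0))\<^sup>2 + (norm (v 4))\<^sup>2 > 0"
  shows "n1 \<noteq> 0" "n2 \<noteq> 0"
    "meas_branch 1 False \<Phi> 0 / complex_of_real n2 = v 0 / of_real (sqrt ((norm (v 0))\<^sup>2 + (norm (v 4))\<^sup>2))"
    "meas_branch 1 False \<Phi> 1 / complex_of_real n2 = v 4 / of_real (sqrt ((norm (v 0))\<^sup>2 + (norm (v 4))\<^sup>2))"
proof -
  have n1e: "n1 = sqrt ((norm (v 0))\<^sup>2 + (norm (v 2))\<^sup>2 + (norm (v 4))\<^sup>2 + (norm (v 6))\<^sup>2)"
    unfolding n1_def vnorm_def meas_branch_def by (simp add: eval_nat_numeral)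
  have n1p: "n1 > 0" unfolding n1e using D
    by (smt (verit) real_sqrt_gt_zero zero_le_power2)
  then show "n1 \<noteq> 0" by simp
  have P0: "\<Phi> 0 = v 0 / of_real n1" and P2: "\<Phi> 2 = v 4 / of_real n1"
    unfolding \<Phi>_def meas_branch_def by simp_all
  have n2e: "n2 = sqrt ((norm (v 0))\<^sup>2 + (norm (v 4))\<^sup>2) / n1"
    unfolding n2_def vnorm_def sum2
    using n1p by (simp add: meas_branch_def P0 P2 norm_divide power_divide real_sqrt_divide
        add_divide_distrib[symmetric])
  have n2p: "n2 > 0" unfolding n2e using D n1p by simp
  then show "n2 \<noteq> 0" by simp
  show "meas_branch 1 False \<Phi> 0 / complex_of_real n2 = v 0 / of_real (sqrt ((norm (v 0))\<^sup>2 + (norm (v 4))\<^sup>2))"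
    using n1p D by (simp add: meas_branch_def P0 n2e)
  show "meas_branch 1 False \<Phi> 1 / complex_of_real n2 = v 4 / of_real (sqrt ((norm (v 0))\<^sup>2 + (norm (v 4))\<^sup>2))"
    using n1p D by (simp add: meas_branch_def P2 n2e)
qed

lemma sq1p: assumes "0<p" "p<1" shows "sqrt (1 - p\<^sup>2) = sqrt (1-p) * sqrt (1+p)"
proof -
  have "1 - p\<^sup>2 = (1-p)*(1+p)" by (simp add: power2_eq_square algebra_simps)
  then show ?thesis by (simp add: real_sqrt_mult)
qed

lemma eth_eq:
  assumes p: "0<p" "p<1"
  shows "complex_of_real (sqrt (1 - p\<^sup>2) / p) *
      (complex_of_real (sqrt 2 * p / (1 + p) * sqrt (p / (1 - p))) + complex_of_real (p / (1 + p)) * \<i>)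
      * complex_of_real p
    = complex_of_real (sqrt 2 * p * sqrt p / sqrt (1+p)) + \<i> * complex_of_real (p * sqrt (1-p) / sqrt (1+p))"
proof -
  have a: "sqrt (1 - p\<^sup>2) / p * (sqrt 2 * p / (1 + p) * sqrt (p / (1 - p))) * p = sqrt 2 * p * sqrt p / sqrt (1+p)"
  proof -
    have s1: "sqrt (1+p) * sqrt (1+p) = 1 + p" using p by simp
    have s2: "sqrt (1-p) > 0" "sqrt (1+p) > 0" using p by simp_all
    have g: "\<And>q r t. q > 0 \<Longrightarrow> r > 0 \<Longrightarrow> r*q/p*(sqrt 2 * p/(q*q) * (t/r))*p = sqrt 2 * p * t / q"
      using p by (simp add: field_simps power2_eq_square)
    show ?thesis using g[OF s2(2) s2(1), of "sqrt p"] p by (simp only: sq1p[OF p] real_sqrt_divide s1)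
  qed
  have b: "sqrt (1 - p\<^sup>2) / p * (p / (1 + p)) * p = p * sqrt (1-p) / sqrt (1+p)"
  proof -
    have s1: "sqrt (1+p) * sqrt (1+p) = 1 + p" using p by simp
    have s2: "sqrt (1-p) > 0" "sqrt (1+p) > 0" using p by simp_all
    have g: "\<And>q r. q > 0 \<Longrightarrow> r > 0 \<Longrightarrow> r*q/p*(p/(q*q))*p = p * r / q"
      using p by (simp add: field_simps power2_eq_square)
    show ?thesis using g[OF s2(2) s2(1)] p by (simp only: sq1p[OF p] s1)
  qed
  have "complex_of_real (sqrt (1 - p\<^sup>2) / p) *
      (complex_of_real (sqrt 2 * p / (1 + p) * sqrt (p / (1 - p))) + complex_of_real (p / (1 + p)) * \<i>)
      * complex_of_real p = complex_of_real (sqrt (1 - p\<^sup>2) / p * (sqrt 2 * p / (1 + p) * sqrt (p / (1 - p))) * p)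
       + \<i> * complex_of_real (sqrt (1 - p\<^sup>2) / p * (p / (1 + p)) * p)"
    by (simp only: of_real_mult algebra_simps)
  then show ?thesis by (simp only: a b)
qed

lemma Psi_vals:
  assumes p: "0<p" "p<1"
  defines "A \<equiv> sqrt 2 * p * sqrt p / sqrt (1+p)"
  defines "B \<equiv> p * sqrt (1-p) / sqrt (1+p)"
  defines "S \<equiv> ux * sqrt (1+p)"
  shows "Psi p 0 = complex_of_real S * (complex_of_real A + \<i> * complex_of_real B)"
    "Psi p 4 = complex_of_real S * complex_of_real (sqrt (1 - p\<^sup>2))"
    "(norm (Psi p 0))\<^sup>2 + (norm (Psi p 4))\<^sup>2 = S\<^sup>2"
    "S > 0"
proof -
  have s1: "sqrt (1+p) * sqrt (1+p) = 1 + p" using p by simp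
  have s2: "sqrt (1-p) > 0" "sqrt (1+p) > 0" using p by simp_all
  have sp: "sqrt p * sqrt p = p" "sqrt (1-p) * sqrt (1-p) = 1 - p" using p by simp_all
  have uyx: "uy = sqrt 2 * ux" unfolding uy_def ux_def by simp
  have e1: "S * A = uy * p * sqrt p" unfolding S_def A_def uyx using s2 by simp
  have e2: "S * B = ux * p * sqrt (1-p)" unfolding S_def B_def using s2 by simp
  have "Psi p 0 = complex_of_real (uy * p * sqrt p) + \<i> * complex_of_real (ux * p * sqrt (1-p))"
  proof -
    have cs: "complex_of_real (sqrt p) * complex_of_real (sqrt p) = complex_of_real p"
      using p by (simp flip: of_real_mult add: sp)
    have cs': "complex_of_real (sqrt p) * (complex_of_real (sqrt p) * z) = complex_of_real p * z" for z
      by (simp flip: cs add: mult.assoc)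
    show ?thesis unfolding Psi0 by (simp add: cs cs' algebra_simps)
  qed
  also have "\<dots> = complex_of_real (S*A) + \<i> * complex_of_real (S*B)"
    by (simp only: e1 e2)
  also have "\<dots> = complex_of_real S * (complex_of_real A + \<i> * complex_of_real B)"
    by (simp add: algebra_simps)
  finally show P0: "Psi p 0 = complex_of_real S * (complex_of_real A + \<i> * complex_of_real B)" .
  have e3: "ux * (2 * sqrt p * sqrt p * sqrt (1-p) + sqrt (1-p) * sqrt (1-p) * sqrt (1-p)) = S * sqrt (1 - p\<^sup>2)"
    unfolding S_def sq1p[OF p] using sp s1 by (simp add: algebra_simps)
  have "Psi p 4 = complex_of_real (ux * (2 * sqrt p * sqrt p * sqrt (1-p) + sqrt (1-p) * sqrt (1-p) * sqrt (1-p)))"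
    by (simp only: Psi4 of_real_mult of_real_add of_real_numeral)
  then show P4: "Psi p 4 = complex_of_real S * complex_of_real (sqrt (1 - p\<^sup>2))" unfolding e3 by simp
  have AB: "A\<^sup>2 + B\<^sup>2 = p\<^sup>2"
  proof -
    have "A\<^sup>2 = 2 * p\<^sup>2 * p / (1+p)" unfolding A_def using p by (simp add: power_mult_distrib power_divide)
    moreover have "B\<^sup>2 = p\<^sup>2 * (1-p) / (1+p)" unfolding B_def using p by (simp add: power_mult_distrib power_divide)
    ultimately have "(A\<^sup>2 + B\<^sup>2) * (1+p) = p\<^sup>2 * (1+p)" using p by (simp add: field_simps power2_eq_square)
    then show ?thesis using p by simp
  qed
  have n0: "(norm (complex_of_real A + \<i> * complex_of_real B))\<^sup>2 = A\<^sup>2 + B\<^sup>2"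
    by (simp add: Complex_eq[symmetric] cmod_def)
  have q: "(sqrt (1 - p\<^sup>2))\<^sup>2 = 1 - p\<^sup>2" using p by (simp add: power_le_one)
  show "(norm (Psi p 0))\<^sup>2 + (norm (Psi p 4))\<^sup>2 = S\<^sup>2"
    unfolding P0 P4 norm_mult power_mult_distrib n0 AB norm_of_real power2_abs q
    by (simp add: algebra_simps)
  show "S > 0" unfolding S_def ux_def using s2 by simp
qed

theorem mainTheorem4:
  fixes eth :: "real \<Rightarrow> complex"
  defines "eth \<equiv> (\<lambda>p. complex_of_real (sqrt (1 - p\<^sup>2) / p) *
      (complex_of_real (sqrt 2 * p / (1 + p) * sqrt (p / (1 - p))) + complex_of_real (p / (1 + p)) * \<i>))"
  shows "simulable (\<lambda>p. eth p * complex_of_real p) (\<lambda>p. complex_of_real (sqrt (1 - p\<^sup>2)))"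
proof -
  define \<Phi> where "\<Phi> = (\<lambda>p i. meas_branch 2 False (Psi p) i / complex_of_real (vnorm 2 (meas_branch 2 False (Psi p))))"
  define \<psi> where "\<psi> = (\<lambda>p i. meas_branch 1 False (\<Phi> p) i / complex_of_real (vnorm 1 (meas_branch 1 False (\<Phi> p))))"
  have D: "(norm (Psi p 0))\<^sup>2 + (norm (Psi p 4))\<^sup>2 > 0" if "p \<in> {0<..<1}" for p
  proof -
    have p: "0<p" "p<1" using that by auto
    show ?thesis using Psi_vals(3,4)[OF p] by (metis zero_less_power)
  qed
  have pr3: "producible (Suc 2) Psi" using Psi_prod by (simp add: numeral_3_eq_3)
  have c1: "\<forall>p\<in>{0<..<1}. vnorm 2 (meas_branch 2 False (Psi p)) \<noteq> 0"
  proof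
    fix p :: real assume "p \<in> {0<..<1}"
    from meas2(1)[OF D[OF this]] show "vnorm 2 (meas_branch 2 False (Psi p)) \<noteq> 0" .
  qed
  have c2: "\<forall>p\<in>{0<..<1}. vnorm 1 (meas_branch 1 False (\<Phi> p)) \<noteq> 0"
  proof
    fix p :: real assume "p \<in> {0<..<1}"
    from meas2(2)[OF D[OF this]] show "vnorm 1 (meas_branch 1 False (\<Phi> p)) \<noteq> 0"
      unfolding \<Phi>_def .
  qed
  have "producible 2 \<Phi>" unfolding \<Phi>_def
    by (rule producible.meas[OF pr3 c1])
  then have pr2: "producible (Suc 1) \<Phi>" by (simp add: numeral_2_eq_2)
  have "producible 1 \<psi>" unfolding \<psi>_def
    by (rule producible.meas[OF pr2 c2])
  moreover have "\<exists>c. norm c = 1 \<and> \<psi> p 0 = c * (eth p * complex_of_real p) \<and>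
      \<psi> p 1 = c * complex_of_real (sqrt (1 - p\<^sup>2))" if "p \<in> {0<..<1}" for p
  proof -
    have p: "0<p" "p<1" using that by auto
    define S where "S = ux * sqrt (1+p)"
    have sD: "sqrt ((norm (Psi p 0))\<^sup>2 + (norm (Psi p 4))\<^sup>2) = S"
      using Psi_vals(3,4)[OF p] unfolding S_def by (metis abs_of_pos real_sqrt_abs)
    have Sp: "S > 0" using Psi_vals(4)[OF p] unfolding S_def .
    have e0: "\<psi> p 0 = Psi p 0 / of_real S"
      using meas2(3)[OF D[OF that]] unfolding \<psi>_def \<Phi>_def sD .
    have e1: "\<psi> p 1 = Psi p 4 / of_real S"
      using meas2(4)[OF D[OF that]] unfolding \<psi>_def \<Phi>_def sD .
    have "\<psi> p 0 = eth p * complex_of_real p"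
    proof -
      have Sn: "complex_of_real S \<noteq> 0" using Sp by simp
      have "\<psi> p 0 = complex_of_real (sqrt 2 * p * sqrt p / sqrt (1+p)) + \<i> * complex_of_real (p * sqrt (1-p) / sqrt (1+p))"
        unfolding e0 Psi_vals(1)[OF p] S_def[symmetric] using Sn by simp
      then show ?thesis unfolding eth_def using eth_eq[OF p] by simp
    qed
    moreover have "\<psi> p 1 = complex_of_real (sqrt (1 - p\<^sup>2))"
      unfolding e1 Psi_vals(2)[OF p] S_def[symmetric] using Sp by simp
    ultimately show ?thesis by (intro exI[of _ 1]) simp
  qed
  ultimately show ?thesis unfolding simulable_def by blast
qed

end
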